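(* Let $A$ be an $n\times n$ complex matrix with eigenvalues, multiplicities, $P_i$, $N_i$, $B(z)$ and $q_i$ as in the context. Then for every $i\in\{1,\dots,m\}$ and every integer $0\le s\le n_i-1$, $$\frac{d^{s}B(z)}{dz^{s}}\Big|_{z=\lambda_i}= s!\,N_i^{\,n_i-1-s}\,q_i(\lambda_i\mathbb{1}+N_i)\,P_i .$$ In particular, $$\frac{d^{n_i-1}B(z)}{dz^{n_i-1}}\Big|_{z=\lambda_i}=(n_i-1)!\,\prod_{j\ne i}(N_i+(\lambda_i-\lambda_j)\mathbb{1})^{n_j}\,P_i .$$
   Context: For an $n\times n$ complex matrix $A$ with distinct eigenvalues $\lambda_1,\dots,\lambda_m$ and algebraic multiplicities $n_1,\dots,n_m$, let $W_i=\ker(A-\lambda_i\mathbb{1})^{n_i}$ be the generalized eigenspace of $\lambda_i$, so $\mathbb{C}^n=\bigoplus_i W_i$. Let $P_i$ be the projection onto $W_i$ along $\bigoplus_{j\ne i}W_j$, and let $N_i=(A-\lambda_i\mathbb{1})P_i$ (a nilpotent matrix commuting with $P_i$, with $N_i^{n_i}=0$). Let $p(z)=\det(z\mathbb{1}-A)=\prod_{j=1}^m(z-\lambda_j)^{n_j}$, let $B(z)=\operatorname{Adj}(z\mathbb{1}-A)$ be the adjugate (transpose of the cofactor matrix) of $z\mathbb{1}-A$, a matrix polynomial in $z$, and let $q_i(z)=p(z)/(z-\lambda_i)^{n_i}=\prod_{j\ne i}(z-\lambda_j)^{n_j}$. For a polynomial $q$, $q(\lambda_i\mathbb{1}+N_i)$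 is the usual matrix polynomial evaluation. *)

theory Defs
  imports "Jordan_Normal_Form.Char_Poly" "Jordan_Normal_Form.Matrix_Kernel" "HOL-Analysis.Derivative"
begin

definition mat_poly_eval :: "'a :: comm_ring_1 poly \<Rightarrow> 'a mat \<Rightarrow> 'a mat" where
  "mat_poly_eval q M =
     foldr (\<lambda>c X. c \<cdot>\<^sub>m 1\<^sub>m (dim_row M) + M * X) (coeffs q) (0\<^sub>m (dim_row M) (dim_row M))"

(* ordered product of n x n matrices f x, x ranging over a finite set S
   (enumerated by some distinct list; used for commuting factors) *)
definition mat_set_prod :: "nat \<Rightarrow> ('b \<Rightarrow> 'a :: semiring_1 mat) \<Rightarrow> 'b set \<Rightarrow> 'a mat" where
  "mat_set_prod n f S = foldr (\<lambda>x X. f x * X) (SOME xs. distinct xs \<and> set xs = S) (1\<^sub>m n)"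

definition eigvals :: "complex mat \<Rightarrow> complex set" where
  "eigvals A = {lam. eigenvalue A lam}"

definition alg_mult :: "complex mat \<Rightarrow> complex \<Rightarrow> nat" where
  "alg_mult A lam = Polynomial.order lam (char_poly A)"

definition gen_eigenspace :: "complex mat \<Rightarrow> complex \<Rightarrow> complex Matrix.vec set" where
  "gen_eigenspace A lam = mat_kernel ((A - lam \<cdot>\<^sub>m 1\<^sub>m (dim_row A)) ^\<^sub>m alg_mult A lam)"

definition spec_proj :: "complex mat \<Rightarrow> complex \<Rightarrow> complex mat" where
  "spec_proj A lam = (THE P. P \<in> carrier_mat (dim_row A) (dim_row A) \<and>
      (\<forall>v \<in> gen_eigenspace A lam. P *\<^sub>v v = v) \<and>
      (\<forall>mu \<in> eigvals A - {lam}. \<forall>v \<in> gen_eigenspace A mu. P *\<^sub>v v = 0\<^sub>v (dim_row A)))"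

definition nilp_part :: "complex mat \<Rightarrow> complex \<Rightarrow> complex mat" where
  "nilp_part A lam = (A - lam \<cdot>\<^sub>m 1\<^sub>m (dim_row A)) * spec_proj A lam"

definition q_poly :: "complex mat \<Rightarrow> complex \<Rightarrow> complex poly" where
  "q_poly A lam = (\<Prod>mu \<in> eigvals A - {lam}. [:-mu, 1:] ^ alg_mult A mu)"

definition adjB :: "complex mat \<Rightarrow> complex \<Rightarrow> complex mat" where
  "adjB A z = adj_mat (z \<cdot>\<^sub>m 1\<^sub>m (dim_row A) - A)"

definition adjB_deriv :: "complex mat \<Rightarrow> nat \<Rightarrow> complex \<Rightarrow> complex mat" where
  "adjB_deriv A s z = Matrix.mat (dim_row A) (dim_row A)
     (\<lambda>(k,l). (deriv ^^ s) (\<lambda>w. adjB A w $$ (k,l)) z)"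

end

theory Submission
  imports Defs "HOL-Computational_Algebra.Field_as_Ring"
begin

abbreviation mpe where "mpe \<equiv> mat_poly_eval"

lemma mpe_0[simp]: "mpe 0 X = 0\<^sub>m (dim_row X) (dim_row X)"
  by (simp add: mat_poly_eval_def)

lemma mpe_pCons: assumes X: "X \<in> carrier_mat n n"
  shows "mpe (pCons a p) X = a \<cdot>\<^sub>m 1\<^sub>m n + X * mpe p X"
proof (cases "p = 0 \<and> a = 0")
  case True
  then show ?thesis using X by (auto simp: mat_poly_eval_def)
next
  case False
  then have "coeffs (pCons a p) = a # coeffs p" by (auto simp: cCons_def)
  then show ?thesis using X by (simp add: mat_poly_eval_def)
qed

lemma mpe_carrier[simp]: assumes X: "X \<in> carrier_mat n n"
  shows "mpe p X \<in> carrier_mat n n"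
  using X by (induction p) (auto simp: mpe_pCons[OF X] simp del: pCons_0_0)

lemma mpe_dim[simp]: assumes X: "X \<in> carrier_mat n n"
  shows "dim_row (mpe p X) = n" "dim_col (mpe p X) = n"
  using mpe_carrier[OF X, of p] by auto

lemma smult_one_mat[simp]: "(1::'a::semiring_1) \<cdot>\<^sub>m A = A"
  by (intro eq_matI) auto

lemma mpe_add: assumes X: "X \<in> carrier_mat n n"
  shows "mpe (p + q) X = mpe p X + mpe q X"
proof (induction p q rule: poly_induct2)
  case 0
  then show ?case using X by auto
next
  case (pCons a p b q)
  have c: "mpe p X \<in> carrier_mat n n" "mpe q X \<in> carrier_mat n n" using X by auto
  have e: "X * (mpe p X + mpe q X) = X * mpe p X + X * mpe q X"
    by (rule mult_add_distrib_mat[OF X c])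
  show ?case unfolding add_pCons mpe_pCons[OF X] pCons e
    using X c by (intro eq_matI) (auto simp: ac_simps distrib_right)
qed


lemma mpe_smult: assumes X: "X \<in> carrier_mat n n"
  shows "mpe (Polynomial.smult c p) X = c \<cdot>\<^sub>m mpe p X"
proof (induction p)
  case 0
  then show ?case using X by (auto intro!: eq_matI)
next
  case (pCons a p)
  have c: "mpe p X \<in> carrier_mat n n" using X by auto
  have "X * (c \<cdot>\<^sub>m mpe p X) = c \<cdot>\<^sub>m (X * mpe p X)" by (rule mult_smult_distrib[OF X c])
  then show ?case unfolding smult_pCons mpe_pCons[OF X] pCons(2)
    using X c by (intro eq_matI) (auto simp: distrib_left)
qed

lemma mpe_const[simp]: assumes X: "X \<in> carrier_mat n n"
  shows "mpe [:a:] X = a \<cdot>\<^sub>m 1\<^sub>m n"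
  using X by (simp add: mpe_pCons[OF X])

lemma mpe_one[simp]: assumes X: "X \<in> carrier_mat n n"
  shows "mpe 1 X = 1\<^sub>m n"
  using mpe_const[OF X, of 1] X by (simp add: one_pCons)

lemma mpe_mult: assumes X: "X \<in> carrier_mat n n"
  shows "mpe (p * q) X = mpe p X * mpe q X"
proof (induction p)
  case 0
  then show ?case using X by (auto intro!: eq_matI)
next
  case (pCons a p)
  have c: "mpe p X \<in> carrier_mat n n" "mpe q X \<in> carrier_mat n n" using X by auto
  have e1: "mpe (pCons a p * q) X = a \<cdot>\<^sub>m mpe q X + X * (mpe p X * mpe q X)"
    unfolding mult_pCons_left mpe_add[OF X] mpe_smult[OF X] mpe_pCons[OF X] pCons(2)
    using X c by (intro eq_matI) auto
  have e2: "(a \<cdot>\<^sub>m 1\<^sub>m n + X * mpe p X) * mpe q X = a \<cdot>\<^sub>m 1\<^sub>m n * mpe q X + X * mpe p X * mpe q X"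
    by (rule add_mult_distrib_mat) (use X c in auto)
  have e3: "a \<cdot>\<^sub>m 1\<^sub>m n * mpe q X = a \<cdot>\<^sub>m mpe q X"
    using c by (simp add: mult_smult_assoc_mat[of _ n n _ n] left_mult_one_mat)
  have e4: "X * mpe p X * mpe q X = X * (mpe p X * mpe q X)" using assoc_mult_mat[OF X c] .
  show ?case unfolding e1 mpe_pCons[OF X] e2 e3 e4 ..
qed

lemma mpe_pow: assumes X: "X \<in> carrier_mat n n"
  shows "mpe (p ^ k) X = mpe p X ^\<^sub>m k"
proof (induction k)
  case 0
  then show ?case using mpe_one[OF X] X by simp
next
  case (Suc k)
  then show ?case unfolding power_Suc2 mpe_mult[OF X] by simp
qed

lemma mpe_commute: assumes X: "X \<in> carrier_mat n n"
  shows "mpe p X * mpe q X = mpe q X * mpe p X"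
  by (metis X mpe_mult mult.commute)

lemma mpe_X: assumes X: "X \<in> carrier_mat n n"
  shows "mpe [:a, 1:] X = a \<cdot>\<^sub>m 1\<^sub>m n + X"
  using X by (simp add: mpe_pCons[OF X])

lemma mpe_pcompose: assumes X: "X \<in> carrier_mat n n"
  shows "mpe (pcompose p r) X = mpe p (mpe r X)"
proof (induction p)
  case 0
  then show ?case using X by auto
next
  case (pCons a p)
  have Y: "mpe r X \<in> carrier_mat n n" using X by auto
  show ?case unfolding pcompose_pCons mpe_add[OF X] mpe_mult[OF X] mpe_pCons[OF Y] pCons(2)
    using X by simp
qed

lemma mpe_commute_gen: assumes X: "X \<in> carrier_mat n n" and Y: "Y \<in> carrier_mat n n"
  and c: "X * Y = Y * X"
  shows "mpe p X * Y = Y * mpe p X"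
proof (induction p)
  case 0
  then show ?case using X Y by (auto intro!: eq_matI)
next
  case (pCons a p)
  have Z: "mpe p X \<in> carrier_mat n n" using X by auto
  have e1: "(a \<cdot>\<^sub>m 1\<^sub>m n + X * mpe p X) * Y = a \<cdot>\<^sub>m 1\<^sub>m n * Y + X * mpe p X * Y"
    by (rule add_mult_distrib_mat) (use X Y Z in auto)
  have e2: "a \<cdot>\<^sub>m 1\<^sub>m n * Y = a \<cdot>\<^sub>m Y"
    using Y by (simp add: mult_smult_assoc_mat[of _ n n _ n] left_mult_one_mat)
  have e3: "X * mpe p X * Y = X * (mpe p X * Y)" by (rule assoc_mult_mat[OF X Z Y])
  have e4: "X * (Y * mpe p X) = (X * Y) * mpe p X" by (rule assoc_mult_mat[OF X Y Z, symmetric])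
  have e5: "(Y * X) * mpe p X = Y * (X * mpe p X)" by (rule assoc_mult_mat[OF Y X Z])
  have e6: "Y * (a \<cdot>\<^sub>m 1\<^sub>m n + X * mpe p X) = Y * (a \<cdot>\<^sub>m 1\<^sub>m n) + Y * (X * mpe p X)"
    by (rule mult_add_distrib_mat) (use X Y Z in auto)
  have e7: "Y * (a \<cdot>\<^sub>m 1\<^sub>m n) = a \<cdot>\<^sub>m Y"
    using mult_smult_distrib[OF Y one_carrier_mat, of a] Y by simp
  show ?case unfolding mpe_pCons[OF X] e1 e2 e3 pCons(2) e4 c e5 e6 e7 ..
qed


definition Bc :: "complex mat \<Rightarrow> nat \<Rightarrow> complex mat" where
  "Bc X s = Matrix.mat (dim_row X) (dim_row X)
     (\<lambda>(i,j). coeff (adj_mat (char_poly_matrix X) $$ (i,j)) s)"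

lemma Bc_dim[simp]: "dim_row (Bc X s) = dim_row X" "dim_col (Bc X s) = dim_row X"
  unfolding Bc_def by auto

lemma Bc_carrier[simp]: "X \<in> carrier_mat n n \<Longrightarrow> Bc X s \<in> carrier_mat n n"
  unfolding Bc_def by auto

lemma mat_mult_entry:
  assumes A: "A \<in> carrier_mat n n" and B: "B \<in> carrier_mat n n" and i: "i < n" and j: "j < n"
  shows "(A * B) $$ (i,j) = (\<Sum>k\<in>{0..<n}. A $$ (i,k) * B $$ (k,j))"
proof -
  have "(A * B) $$ (i,j) = Matrix.row A i \<bullet> col B j" using A B i j by simp
  also have "\<dots> = (\<Sum>k\<in>{0..<n}. Matrix.row A i $ k * col B j $ k)"
    unfolding scalar_prod_def using B by simp
  also have "\<dots> = (\<Sum>k\<in>{0..<n}. A $$ (i,k) * B $$ (k,j))"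
    by (rule sum.cong) (use A B i j in auto)
  finally show ?thesis .
qed

lemma cpm_adj_entry:
  fixes X :: "complex mat"
  assumes X: "X \<in> carrier_mat n n" and i: "i < n" and j: "j < n"
  shows "[:0,1:] * adj_mat (char_poly_matrix X) $$ (i,j)
     - (\<Sum>k\<in>{0..<n}. [:X $$ (i,k):] * adj_mat (char_poly_matrix X) $$ (k,j))
     = (if i = j then char_poly X else 0)"
proof -
  let ?C = "char_poly_matrix X"
  let ?B = "adj_mat ?C"
  have C: "?C \<in> carrier_mat n n" using X by simp
  have B: "?B \<in> carrier_mat n n" using adj_mat(1)[OF C] .
  have "(?C * ?B) $$ (i,j) = (char_poly X \<cdot>\<^sub>m 1\<^sub>m n) $$ (i,j)"
    using adj_mat(2)[OF C] unfolding char_poly_def by simp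
  also have "\<dots> = (if i = j then char_poly X else 0)" using i j by simp
  finally have e: "(?C * ?B) $$ (i,j) = (if i = j then char_poly X else 0)" .
  have Cik: "?C $$ (i,k) = (if i = k then [:0,1:] else 0) - [:X $$ (i,k):]" if k: "k < n" for k
    using X i k by (cases "i = k") (auto simp: char_poly_matrix_def)
  have "(?C * ?B) $$ (i,j) = (\<Sum>k\<in>{0..<n}. ?C $$ (i,k) * ?B $$ (k,j))"
    by (rule mat_mult_entry[OF C B i j])
  also have "\<dots> = (\<Sum>k\<in>{0..<n}. (if k = i then [:0,1:] * ?B $$ (k,j) else 0)
       - [:X $$ (i,k):] * ?B $$ (k,j))"
  proof (rule sum.cong[OF refl])
    fix k assume "k \<in> {0..<n}"
    then have k: "k < n" by simp
    show "?C $$ (i,k) * ?B $$ (k,j) = (if k = i then [:0,1:] * ?B $$ (k,j) else 0)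
       - [:X $$ (i,k):] * ?B $$ (k,j)"
      unfolding Cik[OF k] by (cases "i = k") (simp_all add: left_diff_distrib)
  qed
  also have "\<dots> = (\<Sum>k\<in>{0..<n}. (if k = i then [:0,1:] * ?B $$ (k,j) else 0))
       - (\<Sum>k\<in>{0..<n}. [:X $$ (i,k):] * ?B $$ (k,j))"
    by (rule sum_subtractf)
  also have "(\<Sum>k\<in>{0..<n}. (if k = i then [:0,1:] * ?B $$ (k,j) else 0)) = [:0,1:] * ?B $$ (i,j)"
    using i by (subst sum.delta) auto
  finally show ?thesis using e by simp
qed

lemma coeff_x_mult: "coeff ([:0,1:] * p) (Suc s) = coeff p s" "coeff ([:0,1:] * p) 0 = (0::complex)"
  by (simp_all add: mult_pCons_left)

lemma coeff_const_mult: "coeff ([:a:] * p) s = (a::complex) * coeff p s"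
  by simp

lemma Bc_entry: "i < dim_row X \<Longrightarrow> j < dim_row X \<Longrightarrow>
   Bc X s $$ (i,j) = coeff (adj_mat (char_poly_matrix X) $$ (i,j)) s"
  unfolding Bc_def by simp

lemma mult_Bc_entry:
  fixes X :: "complex mat"
  assumes X: "X \<in> carrier_mat n n" and i: "i < n" and j: "j < n"
  shows "(X * Bc X s) $$ (i,j) = (\<Sum>k\<in>{0..<n}. X $$ (i,k) * coeff (adj_mat (char_poly_matrix X) $$ (k,j)) s)"
  unfolding mat_mult_entry[OF X Bc_carrier[OF X] i j]
  by (rule sum.cong[OF refl]) (use X j in \<open>auto simp: Bc_entry\<close>)

lemma Bc_rec:
  fixes X :: "complex mat"
  assumes X: "X \<in> carrier_mat n n"
  shows "Bc X s = X * Bc X (Suc s) + coeff (char_poly X) (Suc s) \<cdot>\<^sub>m 1\<^sub>m n"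
proof (rule eq_matI)
  fix i j assume "i < dim_row (X * Bc X (Suc s) + coeff (char_poly X) (Suc s) \<cdot>\<^sub>m 1\<^sub>m n)"
    "j < dim_col (X * Bc X (Suc s) + coeff (char_poly X) (Suc s) \<cdot>\<^sub>m 1\<^sub>m n)"
  then have i: "i < n" and j: "j < n" by auto
  let ?B = "adj_mat (char_poly_matrix X)"
  have "coeff ([:0,1:] * ?B $$ (i,j) - (\<Sum>k\<in>{0..<n}. [:X $$ (i,k):] * ?B $$ (k,j))) (Suc s)
      = coeff (if i = j then char_poly X else 0) (Suc s)"
    using cpm_adj_entry[OF X i j] by simp
  then have "coeff (?B $$ (i,j)) s - (\<Sum>k\<in>{0..<n}. X $$ (i,k) * coeff (?B $$ (k,j)) (Suc s))
      = (if i = j then coeff (char_poly X) (Suc s) else 0)"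
    by (simp add: coeff_sum coeff_x_mult coeff_diff)
  then have h: "coeff (?B $$ (i,j)) s = (\<Sum>k\<in>{0..<n}. X $$ (i,k) * coeff (?B $$ (k,j)) (Suc s))
      + (if i = j then coeff (char_poly X) (Suc s) else 0)"
    by (simp add: diff_eq_eq)
  show "Bc X s $$ (i,j) = (X * Bc X (Suc s) + coeff (char_poly X) (Suc s) \<cdot>\<^sub>m 1\<^sub>m n) $$ (i,j)"
    using X i j by (simp add: Bc_entry mult_Bc_entry[OF X i j] h)
qed (use X in auto)

lemma Bc_0:
  fixes X :: "complex mat"
  assumes X: "X \<in> carrier_mat n n"
  shows "X * Bc X 0 = - coeff (char_poly X) 0 \<cdot>\<^sub>m 1\<^sub>m n"
proof (rule eq_matI)
  fix i j assume "i < dim_row (- coeff (char_poly X) 0 \<cdot>\<^sub>m 1\<^sub>m n)"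
    "j < dim_col (- coeff (char_poly X) 0 \<cdot>\<^sub>m 1\<^sub>m n)"
  then have i: "i < n" and j: "j < n" by auto
  let ?B = "adj_mat (char_poly_matrix X)"
  have "coeff ([:0,1:] * ?B $$ (i,j) - (\<Sum>k\<in>{0..<n}. [:X $$ (i,k):] * ?B $$ (k,j))) 0
      = coeff (if i = j then char_poly X else 0) 0"
    using cpm_adj_entry[OF X i j] by simp
  then have "- (\<Sum>k\<in>{0..<n}. X $$ (i,k) * coeff (?B $$ (k,j)) 0)
      = (if i = j then coeff (char_poly X) 0 else 0)"
    by (simp add: coeff_sum coeff_x_mult coeff_diff)
  then have h: "(\<Sum>k\<in>{0..<n}. X $$ (i,k) * coeff (?B $$ (k,j)) 0)
      = - (if i = j then coeff (char_poly X) 0 else 0)"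
    by (simp add: minus_equation_iff)
  show "(X * Bc X 0) $$ (i,j) = (- coeff (char_poly X) 0 \<cdot>\<^sub>m 1\<^sub>m n) $$ (i,j)"
    using X i j by (simp add: mult_Bc_entry[OF X i j] h)
qed (use X in auto)

lemma Bc_vanish:
  fixes X :: "complex mat"
  assumes X: "X \<in> carrier_mat n n"
  shows "\<exists>K. \<forall>s\<ge>K. Bc X s = 0\<^sub>m n n"
proof -
  let ?B = "adj_mat (char_poly_matrix X)"
  define K where "K = Suc (\<Sum>i<n. \<Sum>j<n. degree (?B $$ (i,j)))"
  have "Bc X s = 0\<^sub>m n n" if s: "s \<ge> K" for s
  proof (rule eq_matI)
    fix i j assume "i < dim_row (0\<^sub>m n n :: complex mat)" "j < dim_col (0\<^sub>m n n :: complex mat)"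
    then have i: "i < n" and j: "j < n" by auto
    have "degree (?B $$ (i,j)) \<le> (\<Sum>j<n. degree (?B $$ (i,j)))"
      by (rule member_le_sum) (use j in auto)
    also have "\<dots> \<le> (\<Sum>i<n. \<Sum>j<n. degree (?B $$ (i,j)))"
      by (rule member_le_sum[where f = "\<lambda>i. \<Sum>j<n. degree (?B $$ (i,j))"]) (use i in auto)
    finally have "degree (?B $$ (i,j)) < s" using s unfolding K_def by simp
    then show "Bc X s $$ (i,j) = 0\<^sub>m n n $$ (i,j)"
      using X i j by (simp add: Bc_def coeff_eq_0)
  qed (use X in auto)
  then show ?thesis by blast
qed

lemma mpe_pCons': assumes X: "X \<in> carrier_mat n n"
  shows "mpe (pCons a p) X = X * mpe p X + a \<cdot>\<^sub>m 1\<^sub>m n"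
  unfolding mpe_pCons[OF X] by (rule comm_add_mat) (use X in auto)

lemma poly_shift_pCons: "poly_shift k p = pCons (coeff p k) (poly_shift (Suc k) p)"
  by (rule poly_eqI) (auto simp: coeff_poly_shift coeff_pCons split: nat.split)

lemma Bc_closed:
  fixes X :: "complex mat"
  assumes X: "X \<in> carrier_mat n n"
  shows "Bc X s = mpe (poly_shift (Suc s) (char_poly X)) X"
proof -
  obtain K where K: "\<And>s. s \<ge> K \<Longrightarrow> Bc X s = 0\<^sub>m n n" using Bc_vanish[OF X] by blast
  define K' where "K' = max K (Suc n)"
  have "Bc X s = mpe (poly_shift (Suc s) (char_poly X)) X" if "s + j \<ge> K'" for j s
    using that
  proof (induction j arbitrary: s)
    case 0
    then have "s \<ge> K" "s \<ge> Suc n" unfolding K'_def by auto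
    have "poly_shift (Suc s) (char_poly X) = 0"
    proof (rule poly_eqI)
      fix i
      have "degree (char_poly X) = n" using degree_monic_char_poly[OF X] by simp
      then show "coeff (poly_shift (Suc s) (char_poly X)) i = coeff 0 i"
        using \<open>s \<ge> Suc n\<close> by (simp add: coeff_poly_shift coeff_eq_0)
    qed
    then show ?case using K[OF \<open>s \<ge> K\<close>] X by simp
  next
    case (Suc j)
    then have IH: "Bc X (Suc s) = mpe (poly_shift (Suc (Suc s)) (char_poly X)) X" by simp
    show ?case unfolding Bc_rec[OF X, of s] IH
      by (subst (2) poly_shift_pCons) (simp add: mpe_pCons'[OF X])
  qed
  from this[of s K'] show ?thesis by simp
qed

lemma cayley_hamilton:
  fixes X :: "complex mat"
  assumes X: "X \<in> carrier_mat n n"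
  shows "mpe (char_poly X) X = 0\<^sub>m n n"
proof -
  have e: "char_poly X = pCons (coeff (char_poly X) 0) (poly_shift (Suc 0) (char_poly X))"
    using poly_shift_pCons[of 0 "char_poly X"] by simp
  have "mpe (char_poly X) X = X * Bc X 0 + coeff (char_poly X) 0 \<cdot>\<^sub>m 1\<^sub>m n"
    by (subst e, subst mpe_pCons'[OF X], subst Bc_closed[OF X, of 0]) (rule refl)
  also have "\<dots> = 0\<^sub>m n n" unfolding Bc_0[OF X] by (rule eq_matI) auto
  finally show ?thesis .
qed



declare minus_carrier_mat[simp]


lemma adjB_entry:
  fixes A :: "complex mat"
  assumes A: "A \<in> carrier_mat n n" and k: "k < n" and l: "l < n"
  shows "adjB A z $$ (k,l) = poly (adj_mat (char_poly_matrix (A - c \<cdot>\<^sub>m 1\<^sub>m n)) $$ (k,l)) (z - c)"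
proof -
  let ?M = "A - c \<cdot>\<^sub>m 1\<^sub>m n"
  let ?C = "char_poly_matrix ?M"
  let ?Z = "z \<cdot>\<^sub>m 1\<^sub>m n - A"
  have M: "?M \<in> carrier_mat n n" using A by simp
  have C: "?C \<in> carrier_mat n n" using M by simp
  have Z: "?Z \<in> carrier_mat n n" using A by simp
  have "adjB A z $$ (k,l) = cofactor ?Z l k" unfolding adjB_def adj_mat_def using A k l by simp
  also have "\<dots> = (-1)^(l+k) * det (mat_delete ?Z l k)" unfolding cofactor_def ..
  also have "poly (det (mat_delete ?C l k)) (z - c) = det (mat_delete ?Z l k)"
  proof (rule poly_det_cong[of _ "n-1"])
    show "mat_delete ?Z l k \<in> carrier_mat (n-1) (n-1)" using mat_delete_carrier[OF Z] .
    show "mat_delete ?C l k \<in> carrier_mat (n-1) (n-1)" using mat_delete_carrier[OF C] .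
    fix i j assume i: "i < n-1" and j: "j < n-1"
    show "poly (mat_delete ?C l k $$ (i,j)) (z-c) = mat_delete ?Z l k $$ (i,j)"
      using A i j by (auto simp: mat_delete_def char_poly_matrix_def)
  qed
  then have "det (mat_delete ?Z l k) = poly (det (mat_delete ?C l k)) (z - c)" ..
  also have "(-1)^(l+k) * poly (det (mat_delete ?C l k)) (z-c) = poly (adj_mat ?C $$ (k,l)) (z - c)"
    unfolding adj_mat_def cofactor_def using carrier_matD[OF C] k l by simp
  finally show ?thesis .
qed

lemma deriv_poly_shift: "deriv (\<lambda>w. poly p (w - c)) = (\<lambda>w. poly (pderiv p) (w - (c::complex)))"
proof
  fix w :: complex
  have "((\<lambda>w. poly p (w - c)) has_field_derivative poly (pderiv p) (w - c) * 1) (at w)"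
    by (rule DERIV_chain2[OF poly_DERIV]) (auto intro!: derivative_eq_intros)
  then show "deriv (\<lambda>w. poly p (w - c)) w = poly (pderiv p) (w - c)"
    by (simp add: DERIV_imp_deriv)
qed

lemma higher_deriv_poly_shift:
  "(deriv ^^ s) (\<lambda>w. poly p (w - c)) = (\<lambda>w. poly ((pderiv ^^ s) p) (w - (c::complex)))"
  by (induction s) (simp_all add: deriv_poly_shift)

lemma higher_deriv_poly_shift_at:
  "(deriv ^^ s) (\<lambda>w. poly p (w - c)) c = fact s * coeff p s" for c :: complex
  by (simp add: higher_deriv_poly_shift poly_0_coeff_0 coeff_higher_pderiv pochhammer_fact)

lemma adjB_deriv_Bc:
  fixes A :: "complex mat"
  assumes A: "A \<in> carrier_mat n n"
  shows "adjB_deriv A s c = of_nat (fact s) \<cdot>\<^sub>m Bc (A - c \<cdot>\<^sub>m 1\<^sub>m n) s"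
proof (rule eq_matI)
  fix i j assume "i < dim_row (of_nat (fact s) \<cdot>\<^sub>m Bc (A - c \<cdot>\<^sub>m 1\<^sub>m n) s)"
    "j < dim_col (of_nat (fact s) \<cdot>\<^sub>m Bc (A - c \<cdot>\<^sub>m 1\<^sub>m n) s)"
  then have i: "i < n" and j: "j < n" using A by auto
  have f: "(\<lambda>w. adjB A w $$ (i,j)) = (\<lambda>w. poly (adj_mat (char_poly_matrix (A - c \<cdot>\<^sub>m 1\<^sub>m n)) $$ (i,j)) (w - c))"
    by (rule ext) (rule adjB_entry[OF A i j])
  show "adjB_deriv A s c $$ (i,j) = (of_nat (fact s) \<cdot>\<^sub>m Bc (A - c \<cdot>\<^sub>m 1\<^sub>m n) s) $$ (i,j)"
    unfolding adjB_deriv_def using A i j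
    by (simp add: f higher_deriv_poly_shift_at Bc_entry)
qed (use A in \<open>auto simp: adjB_deriv_def\<close>)

lemma char_poly_shift:
  fixes A :: "complex mat"
  assumes A: "A \<in> carrier_mat n n"
  shows "poly (char_poly (A - c \<cdot>\<^sub>m 1\<^sub>m n)) t = poly (char_poly A) (t + c)"
proof -
  have M: "A - c \<cdot>\<^sub>m 1\<^sub>m n \<in> carrier_mat n n" using A by simp
  have "char_matrix (A - c \<cdot>\<^sub>m 1\<^sub>m n) t = char_matrix A (t + c)"
    unfolding char_matrix_def using A by (intro eq_matI) auto
  then show ?thesis unfolding char_poly_matrix[OF A] char_poly_matrix[OF M] by simp
qed

lemma eigvals_roots: "A \<in> carrier_mat n n \<Longrightarrow> eigvals A = {z. poly (char_poly A) z = 0}"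
  unfolding eigvals_def using eigenvalue_root_char_poly by blast

lemma char_poly_monic: "A \<in> carrier_mat n n \<Longrightarrow> lead_coeff (char_poly A) = 1"
  using degree_monic_char_poly by metis

lemma char_poly_nz: assumes A: "A \<in> carrier_mat n n" shows "char_poly A \<noteq> 0"
proof
  assume "char_poly A = 0"
  with char_poly_monic[OF A] show False by simp
qed

lemma finite_eigvals: assumes A: "(A :: complex mat) \<in> carrier_mat n n" shows "finite (eigvals A)"
  unfolding eigvals_roots[OF A] by (rule poly_roots_finite[OF char_poly_nz[OF A]])

lemma char_poly_decomp:
  fixes A :: "complex mat"
  assumes A: "A \<in> carrier_mat n n"
  shows "char_poly A = (\<Prod>\<mu>\<in>eigvals A. [:-\<mu>,1:] ^ alg_mult A \<mu>)"
  using complex_poly_decompose[of "char_poly A"] char_poly_monic[OF A]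
  unfolding eigvals_roots[OF A] alg_mult_def by simp

lemma char_poly_split:
  fixes A :: "complex mat"
  assumes A: "A \<in> carrier_mat n n" and mu: "\<mu> \<in> eigvals A"
  shows "char_poly A = [:-\<mu>,1:] ^ alg_mult A \<mu> * q_poly A \<mu>"
  unfolding char_poly_decomp[OF A] q_poly_def using prod.remove[OF finite_eigvals[OF A] mu] by simp

lemma q_poly_split:
  fixes A :: "complex mat"
  assumes A: "A \<in> carrier_mat n n" and nu: "\<nu> \<in> eigvals A - {\<mu>}"
  shows "q_poly A \<mu> = [:-\<nu>,1:] ^ alg_mult A \<nu> * (\<Prod>x\<in>eigvals A - {\<mu>} - {\<nu>}. [:-x,1:] ^ alg_mult A x)"
  unfolding q_poly_def using prod.remove[OF _ nu] finite_eigvals[OF A] by simp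

lemma q_poly_nonroot:
  fixes A :: "complex mat"
  assumes A: "A \<in> carrier_mat n n"
  shows "poly (q_poly A \<mu>) \<mu> \<noteq> 0"
  unfolding q_poly_def poly_prod using finite_eigvals[OF A] by (auto simp: prod_zero_iff)

lemma bezout_eig:
  fixes A :: "complex mat"
  assumes A: "A \<in> carrier_mat n n"
  shows "\<exists>u v. u * q_poly A \<mu> + v * [:-\<mu>,1:] ^ alg_mult A \<mu> = 1"
proof -
  have p: "prime_elem [:-\<mu>,1:]" by (rule prime_elem_linear_field_poly) simp
  have nd: "\<not> [:-\<mu>,1:] dvd q_poly A \<mu>"
    using q_poly_nonroot[OF A] by (simp add: poly_eq_0_iff_dvd)
  have "coprime (q_poly A \<mu>) ([:-\<mu>,1:] ^ alg_mult A \<mu>)"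
    by (rule prime_elem_imp_power_coprime[OF p nd])
  then have "gcd (q_poly A \<mu>) ([:-\<mu>,1:] ^ alg_mult A \<mu>) = 1" by (rule coprime_imp_gcd_eq_1)
  then show ?thesis using bezout_coefficients_fst_snd by metis
qed

lemma alg_mult_pos:
  fixes A :: "complex mat"
  assumes A: "A \<in> carrier_mat n n" and mu: "\<mu> \<in> eigvals A"
  shows "alg_mult A \<mu> > 0"
  using mu char_poly_nz[OF A] order_root unfolding eigvals_roots[OF A] alg_mult_def by auto



lemma mult_zero_vec_right[simp]: "A \<in> carrier_mat nr n \<Longrightarrow> A *\<^sub>v 0\<^sub>v n = 0\<^sub>v nr"
  by (intro eq_vecI) auto

lemma mpe_lin: assumes A: "A \<in> carrier_mat n n"
  shows "mpe [:-\<mu>,1:] A = A - \<mu> \<cdot>\<^sub>m 1\<^sub>m n"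
  unfolding mpe_X[OF A] using A by (intro eq_matI) auto

lemma mpe_x: assumes A: "A \<in> carrier_mat n n"
  shows "mpe [:0,1:] A = A"
  unfolding mpe_X[OF A] using A by (intro eq_matI) auto

lemma mpe_L: assumes A: "A \<in> carrier_mat n n"
  shows "mpe ([:-\<mu>,1:] ^ k) A = (A - \<mu> \<cdot>\<^sub>m 1\<^sub>m n) ^\<^sub>m k"
  unfolding mpe_pow[OF A] mpe_lin[OF A] ..

lemma gen_eig_iff: assumes A: "A \<in> carrier_mat n n"
  shows "w \<in> gen_eigenspace A \<mu> \<longleftrightarrow>
     w \<in> carrier_vec n \<and> (A - \<mu> \<cdot>\<^sub>m 1\<^sub>m n) ^\<^sub>m alg_mult A \<mu> *\<^sub>v w = 0\<^sub>v n"
  unfolding gen_eigenspace_def mat_kernel_def using A by auto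

context
  fixes A :: "complex mat" and n :: nat and lam :: complex and u v :: "complex poly"
  assumes A: "A \<in> carrier_mat n n" and lam: "lam \<in> eigvals A"
    and bez: "u * q_poly A lam + v * [:-lam,1:] ^ alg_mult A lam = 1"
begin

abbreviation "PP \<equiv> mpe (u * q_poly A lam) A"
abbreviation "MM \<equiv> A - lam \<cdot>\<^sub>m 1\<^sub>m n"
abbreviation "LL \<equiv> [:-lam,1:] ^ alg_mult A lam"
abbreviation "QQ \<equiv> q_poly A lam"

lemma P_carrier: "PP \<in> carrier_mat n n" using A by simp
lemma M_carrier: "MM \<in> carrier_mat n n" using A by simp

lemma cp_eq: "char_poly A = LL * QQ" by (rule char_poly_split[OF A lam])

lemma CH: "mpe (char_poly A) A = 0\<^sub>m n n" by (rule cayley_hamilton[OF A])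

lemma P_compl: "PP + mpe v A * MM ^\<^sub>m alg_mult A lam = 1\<^sub>m n"
proof -
  have "mpe (u * QQ + v * LL) A = 1\<^sub>m n" unfolding bez using A by simp
  then show ?thesis unfolding mpe_add[OF A] mpe_mult[OF A] mpe_L[OF A] .
qed

lemma Mm_P: "MM ^\<^sub>m alg_mult A lam * PP = 0\<^sub>m n n"
proof -
  have "LL * (u * QQ) = u * char_poly A" unfolding cp_eq by (simp add: ac_simps)
  then have "mpe LL A * PP = mpe u A * mpe (char_poly A) A"
    by (metis mpe_mult[OF A])
  then show ?thesis unfolding CH mpe_L[OF A] using A by simp
qed

lemma P_idem: "PP * PP = PP"
proof -
  have "(u * QQ) * (u * QQ) + (u * v) * char_poly A = (u * QQ) * (u * QQ + v * LL)"
    unfolding cp_eq by (simp add: algebra_simps)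
  also have "\<dots> = u * QQ" unfolding bez by simp
  finally have "mpe ((u * QQ) * (u * QQ) + (u * v) * char_poly A) A = PP" by simp
  then have "PP * PP + mpe (u * v) A * mpe (char_poly A) A = PP"
    unfolding mpe_add[OF A] mpe_mult[OF A] .
  then show ?thesis unfolding CH
    using A right_add_zero_mat[OF mult_carrier_mat[OF P_carrier P_carrier]] by simp
qed

lemma qA_P: "mpe QQ A * PP = mpe QQ A"
proof -
  have "QQ * (u * QQ) + v * char_poly A = QQ * (u * QQ + v * LL)"
    unfolding cp_eq by (simp add: algebra_simps)
  also have "\<dots> = QQ" unfolding bez by simp
  finally have "mpe (QQ * (u * QQ) + v * char_poly A) A = mpe QQ A" by simp
  then have "mpe QQ A * PP + mpe v A * mpe (char_poly A) A = mpe QQ A"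
    unfolding mpe_add[OF A] mpe_mult[OF A] .
  then show ?thesis unfolding CH
    using A right_add_zero_mat[OF mult_carrier_mat[OF mpe_carrier[OF A] P_carrier]] by simp
qed

lemma P_comm_M: "PP * MM = MM * PP"
  using mpe_commute[OF A, of "u * QQ" "[:-lam,1:]"] unfolding mpe_lin[OF A] .

lemma P_comm_A: "PP * A = A * PP"
  using mpe_commute[OF A, of "u * QQ" "[:0,1:]"] unfolding mpe_x[OF A] .

lemma P_comm_q: "PP * mpe QQ A = mpe QQ A * PP"
  by (rule mpe_commute[OF A])

lemma P_on_W: assumes w: "w \<in> gen_eigenspace A lam" shows "PP *\<^sub>v w = w"
proof -
  from w have wc: "w \<in> carrier_vec n" and wk: "MM ^\<^sub>m alg_mult A lam *\<^sub>v w = 0\<^sub>v n"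
    unfolding gen_eig_iff[OF A] by auto
  have V: "mpe v A \<in> carrier_mat n n" and Mp: "MM ^\<^sub>m alg_mult A lam \<in> carrier_mat n n" using A by auto
  have "w = (PP + mpe v A * MM ^\<^sub>m alg_mult A lam) *\<^sub>v w" unfolding P_compl using wc by simp
  also have "\<dots> = PP *\<^sub>v w + (mpe v A * MM ^\<^sub>m alg_mult A lam) *\<^sub>v w"
    by (rule add_mult_distrib_mat_vec[OF P_carrier _ wc]) (use V Mp in simp)
  also have "(mpe v A * MM ^\<^sub>m alg_mult A lam) *\<^sub>v w = mpe v A *\<^sub>v (MM ^\<^sub>m alg_mult A lam *\<^sub>v w)"
    by (rule assoc_mult_mat_vec[OF V Mp wc])
  also have "\<dots> = 0\<^sub>v n" unfolding wk using V by simp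
  finally show ?thesis using P_carrier wc by simp
qed

lemma P_off_W: assumes mu: "mu \<in> eigvals A - {lam}" and w: "w \<in> gen_eigenspace A mu"
  shows "PP *\<^sub>v w = 0\<^sub>v n"
proof -
  from w have wc: "w \<in> carrier_vec n" and wk: "(A - mu \<cdot>\<^sub>m 1\<^sub>m n) ^\<^sub>m alg_mult A mu *\<^sub>v w = 0\<^sub>v n"
    unfolding gen_eig_iff[OF A] by auto
  define r where "r = (\<Prod>x\<in>eigvals A - {lam} - {mu}. [:-x,1:] ^ alg_mult A x)"
  have e: "u * QQ = (u * r) * [:-mu,1:] ^ alg_mult A mu"
    unfolding q_poly_split[OF A mu] r_def by (simp add: ac_simps)
  have P: "PP = mpe (u * r) A * (A - mu \<cdot>\<^sub>m 1\<^sub>m n) ^\<^sub>m alg_mult A mu"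
    unfolding e mpe_mult[OF A, of "u * r"] mpe_L[OF A] ..
  have R: "mpe (u * r) A \<in> carrier_mat n n" and Mp: "(A - mu \<cdot>\<^sub>m 1\<^sub>m n) ^\<^sub>m alg_mult A mu \<in> carrier_mat n n"
    using A by auto
  show ?thesis unfolding P assoc_mult_mat_vec[OF R Mp wc] wk using R by simp
qed

end



lemma col_in_gen_eig:
  fixes A Pm :: "complex mat"
  assumes A: "A \<in> carrier_mat n n" and Pm: "Pm \<in> carrier_mat n n"
    and K: "(A - mu \<cdot>\<^sub>m 1\<^sub>m n) ^\<^sub>m alg_mult A mu * Pm = 0\<^sub>m n n" and j: "j < n"
  shows "col Pm j \<in> gen_eigenspace A mu"
proof -
  have Mp: "(A - mu \<cdot>\<^sub>m 1\<^sub>m n) ^\<^sub>m alg_mult A mu \<in> carrier_mat n n" using A by simp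
  have "(A - mu \<cdot>\<^sub>m 1\<^sub>m n) ^\<^sub>m alg_mult A mu *\<^sub>v col Pm j = col ((A - mu \<cdot>\<^sub>m 1\<^sub>m n) ^\<^sub>m alg_mult A mu * Pm) j"
    by (rule col_mult2[OF Mp Pm j, symmetric])
  also have "\<dots> = 0\<^sub>v n" unfolding K using j by (intro eq_vecI) auto
  finally show ?thesis unfolding gen_eig_iff[OF A] using Pm j by auto
qed

lemma D_kills:
  fixes D Pm :: "complex mat"
  assumes D: "D \<in> carrier_mat n n" and Pm: "Pm \<in> carrier_mat n n"
    and cols: "\<And>j. j < n \<Longrightarrow> D *\<^sub>v col Pm j = 0\<^sub>v n"
  shows "D * Pm = 0\<^sub>m n n"
proof (rule eq_matI)
  fix i j assume "i < dim_row (0\<^sub>m n n :: complex mat)" "j < dim_col (0\<^sub>m n n :: complex mat)"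
  then have i: "i < n" and j: "j < n" by auto
  have "(D * Pm) $$ (i,j) = (D *\<^sub>v col Pm j) $ i" using D Pm i j by simp
  also have "\<dots> = 0" unfolding cols[OF j] using i by simp
  finally show "(D * Pm) $$ (i,j) = 0\<^sub>m n n $$ (i,j)" using i j by simp
qed (use D Pm in auto)

lemma kill_all_zero:
  fixes A D :: "complex mat"
  assumes A: "A \<in> carrier_mat n n" and D: "D \<in> carrier_mat n n"
    and kill: "\<And>mu w. mu \<in> eigvals A \<Longrightarrow> w \<in> gen_eigenspace A mu \<Longrightarrow> D *\<^sub>v w = 0\<^sub>v n"
  shows "D = 0\<^sub>m n n"
proof -
  have "\<forall>mu. \<exists>uv. fst uv * q_poly A mu + snd uv * [:-mu,1:] ^ alg_mult A mu = 1"
  proof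
    fix mu
    obtain u v where "u * q_poly A mu + v * [:-mu,1:] ^ alg_mult A mu = 1"
      using bezout_eig[OF A] by blast
    then show "\<exists>uv. fst uv * q_poly A mu + snd uv * [:-mu,1:] ^ alg_mult A mu = 1"
      by (intro exI[of _ "(u,v)"]) simp
  qed
  then have "\<exists>f. \<forall>mu. fst (f mu) * q_poly A mu + snd (f mu) * [:-mu,1:] ^ alg_mult A mu = 1"
    by (rule choice)
  then obtain f where f0: "\<forall>mu. fst (f mu) * q_poly A mu + snd (f mu) * [:-mu,1:] ^ alg_mult A mu = 1" ..
  have f: "fst (f mu) * q_poly A mu + snd (f mu) * [:-mu,1:] ^ alg_mult A mu = 1" for mu
    by (rule spec[OF f0])
  define W where "W mu = mpe (snd (f mu) * [:-mu,1:] ^ alg_mult A mu) A" for mu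
  have Wc: "W mu \<in> carrier_mat n n" for mu unfolding W_def using A by simp
  have DW: "D * W mu = D" if mu: "mu \<in> eigvals A" for mu
  proof -
    let ?Pm = "mpe (fst (f mu) * q_poly A mu) A"
    have Pc: "?Pm \<in> carrier_mat n n" using A by simp
    have compl: "?Pm + W mu = 1\<^sub>m n"
    proof -
      have "mpe (fst (f mu) * q_poly A mu + snd (f mu) * [:-mu,1:] ^ alg_mult A mu) A = 1\<^sub>m n"
        unfolding f using A by simp
      then show ?thesis unfolding mpe_add[OF A] W_def .
    qed
    have K: "(A - mu \<cdot>\<^sub>m 1\<^sub>m n) ^\<^sub>m alg_mult A mu * ?Pm = 0\<^sub>m n n"
      by (rule Mm_P[OF A mu f])
    have DP: "D * ?Pm = 0\<^sub>m n n"
    proof (rule D_kills[OF D Pc])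
      fix j assume j: "j < n"
      show "D *\<^sub>v col ?Pm j = 0\<^sub>v n" by (rule kill[OF mu col_in_gen_eig[OF A Pc K j]])
    qed
    have "D = D * 1\<^sub>m n" using D by simp
    also have "\<dots> = D * ?Pm + D * W mu" unfolding compl[symmetric]
      by (rule mult_add_distrib_mat[OF D Pc Wc])
    also have "\<dots> = D * W mu" unfolding DP using D Wc by simp
    finally show ?thesis by simp
  qed
  have prodS: "D * mpe (\<Prod>mu\<in>S. snd (f mu) * [:-mu,1:] ^ alg_mult A mu) A = D"
    if "finite S" "S \<subseteq> eigvals A" for S
    using that
  proof (induction S rule: finite_induct)
    case empty
    then show ?case using A D by simp
  next
    case (insert x F)
    let ?R = "mpe (\<Prod>mu\<in>F. snd (f mu) * [:-mu,1:] ^ alg_mult A mu) A"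
    have Rc: "?R \<in> carrier_mat n n" using A by simp
    have "D * mpe (\<Prod>mu\<in>insert x F. snd (f mu) * [:-mu,1:] ^ alg_mult A mu) A = D * (W x * ?R)"
      unfolding prod.insert[OF insert(1,2)] mpe_mult[OF A] W_def ..
    also have "\<dots> = (D * W x) * ?R" by (rule assoc_mult_mat[OF D Wc Rc, symmetric])
    also have "\<dots> = D"
    proof -
      have x: "x \<in> eigvals A" and F: "F \<subseteq> eigvals A" using insert.prems by auto
      have IH: "D * ?R = D" by (rule insert.IH[OF F])
      show ?thesis unfolding DW[OF x] IH ..
    qed
    finally show ?case .
  qed
  have "(\<Prod>mu\<in>eigvals A. snd (f mu) * [:-mu,1:] ^ alg_mult A mu)
      = (\<Prod>mu\<in>eigvals A. snd (f mu)) * char_poly A"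
    unfolding char_poly_decomp[OF A] by (rule prod.distrib)
  note e = this
  have "D = D * mpe (\<Prod>mu\<in>eigvals A. snd (f mu) * [:-mu,1:] ^ alg_mult A mu) A"
    using prodS[OF finite_eigvals[OF A] subset_refl] by (rule sym)
  also have "\<dots> = D * (mpe (\<Prod>mu\<in>eigvals A. snd (f mu)) A * mpe (char_poly A) A)"
    unfolding e mpe_mult[OF A] ..
  also have "\<dots> = 0\<^sub>m n n" unfolding cayley_hamilton[OF A] using A D by simp
  finally show ?thesis .
qed

lemma spec_proj_eq:
  fixes A :: "complex mat"
  assumes A: "A \<in> carrier_mat n n" and lam: "lam \<in> eigvals A"
    and bez: "u * q_poly A lam + v * [:-lam,1:] ^ alg_mult A lam = 1"
  shows "spec_proj A lam = mpe (u * q_poly A lam) A"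
proof -
  let ?P = "mpe (u * q_poly A lam) A"
  have dA: "dim_row A = n" using A by simp
  have Pc: "?P \<in> carrier_mat n n" using A by simp
  show ?thesis unfolding spec_proj_def dA
  proof (rule the_equality)
    show "?P \<in> carrier_mat n n \<and> (\<forall>v\<in>gen_eigenspace A lam. ?P *\<^sub>v v = v) \<and>
      (\<forall>mu\<in>eigvals A - {lam}. \<forall>v\<in>gen_eigenspace A mu. ?P *\<^sub>v v = 0\<^sub>v n)"
      using Pc P_on_W[OF A lam bez] P_off_W[OF A lam bez] by blast
  next
    fix Y assume Y: "Y \<in> carrier_mat n n \<and> (\<forall>v\<in>gen_eigenspace A lam. Y *\<^sub>v v = v) \<and>
      (\<forall>mu\<in>eigvals A - {lam}. \<forall>v\<in>gen_eigenspace A mu. Y *\<^sub>v v = 0\<^sub>v n)"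
    then have Yc: "Y \<in> carrier_mat n n" by blast
    have "Y - ?P = 0\<^sub>m n n"
    proof (rule kill_all_zero[OF A])
      show "Y - ?P \<in> carrier_mat n n" using Yc Pc by simp
      fix mu w assume mu: "mu \<in> eigvals A" and w: "w \<in> gen_eigenspace A mu"
      have wc: "w \<in> carrier_vec n" using w unfolding gen_eig_iff[OF A] by blast
      have e: "(Y - ?P) *\<^sub>v w = Y *\<^sub>v w - ?P *\<^sub>v w"
        by (rule minus_mult_distrib_mat_vec[OF Yc Pc wc])
      show "(Y - ?P) *\<^sub>v w = 0\<^sub>v n"
      proof (cases "mu = lam")
        case True
        then show ?thesis unfolding e using Y w P_on_W[OF A lam bez] wc by simp
      next
        case False
        then have mu': "mu \<in> eigvals A - {lam}" using mu by simp
        then show ?thesis unfolding e using Y w P_off_W[OF A lam bez mu' w] by simp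
      qed
    qed
    then show "Y = ?P"
    proof -
      assume z: "Y - ?P = 0\<^sub>m n n"
      show "Y = ?P"
      proof (rule eq_matI)
        fix i j assume "i < dim_row ?P" "j < dim_col ?P"
        then have i: "i < n" and j: "j < n" using Pc by auto
        have "(Y - ?P) $$ (i,j) = 0" unfolding z using i j by simp
        then show "Y $$ (i,j) = ?P $$ (i,j)" using Yc Pc i j by simp
      qed (use Yc Pc in auto)
    qed
  qed
qed

lemma char_poly_M:
  fixes A :: "complex mat"
  assumes A: "A \<in> carrier_mat n n" and lam: "lam \<in> eigvals A"
  shows "char_poly (A - lam \<cdot>\<^sub>m 1\<^sub>m n) = monom 1 (alg_mult A lam) * pcompose (q_poly A lam) [:lam,1:]"
proof (rule poly_eq_poly_eq_iff[THEN iffD1], rule ext)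
  fix t
  show "poly (char_poly (A - lam \<cdot>\<^sub>m 1\<^sub>m n)) t =
        poly (monom 1 (alg_mult A lam) * pcompose (q_poly A lam) [:lam,1:]) t"
    unfolding char_poly_shift[OF A] char_poly_split[OF A lam]
    by (simp add: poly_monom poly_pcompose add.commute)
qed

lemma poly_shift_monom_mult:
  assumes "s < m"
  shows "poly_shift (Suc s) (monom 1 m * p) = monom 1 (m - Suc s) * (p :: complex poly)"
  by (rule poly_eqI) (use assms in \<open>auto simp: coeff_poly_shift coeff_monom_mult\<close>)

lemma x_pow_monom: "[:0,1:] ^ k = (monom 1 k :: complex poly)"
  by (induction k) (simp_all add: monom_Suc mult_pCons_left monom_0 one_pCons)

lemma mpe_monom: assumes X: "(X :: complex mat) \<in> carrier_mat n n"
  shows "mpe (monom 1 k) X = X ^\<^sub>m k"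
  unfolding x_pow_monom[symmetric] mpe_pow[OF X] mpe_x[OF X] ..

lemma Bc_formula:
  fixes A :: "complex mat"
  assumes A: "A \<in> carrier_mat n n" and lam: "lam \<in> eigvals A" and s: "s < alg_mult A lam"
  shows "Bc (A - lam \<cdot>\<^sub>m 1\<^sub>m n) s
     = (A - lam \<cdot>\<^sub>m 1\<^sub>m n) ^\<^sub>m (alg_mult A lam - Suc s) * mpe (q_poly A lam) A"
proof -
  let ?M = "A - lam \<cdot>\<^sub>m 1\<^sub>m n"
  have M: "?M \<in> carrier_mat n n" using A by simp
  have e: "mpe [:lam,1:] ?M = A" unfolding mpe_X[OF M] using A by (intro eq_matI) auto
  show ?thesis
    unfolding Bc_closed[OF M] char_poly_M[OF A lam] poly_shift_monom_mult[OF s]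
      mpe_mult[OF M] mpe_monom[OF M] mpe_pcompose[OF M] e ..
qed

lemma pow_N_P:
  fixes M P :: "complex mat"
  assumes M: "M \<in> carrier_mat n n" and P: "P \<in> carrier_mat n n"
    and PM: "P * M = M * P" and PP: "P * P = P"
  shows "(M * P) ^\<^sub>m j * P = M ^\<^sub>m j * P"
proof (induction j)
  case 0
  then show ?case using P by simp
next
  case (Suc j)
  let ?N = "M * P"
  have N: "?N \<in> carrier_mat n n" using M P by simp
  have Nj: "?N ^\<^sub>m j \<in> carrier_mat n n" using N by simp
  have Mj: "M ^\<^sub>m j \<in> carrier_mat n n" using M by simp
  have NP: "?N * P = P * M" using assoc_mult_mat[OF M P P] PP PM by simp
  have "?N ^\<^sub>m Suc j * P = (?N ^\<^sub>m j * ?N) * P" by simp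
  also have "\<dots> = ?N ^\<^sub>m j * (?N * P)" by (rule assoc_mult_mat[OF Nj N P])
  also have "\<dots> = ?N ^\<^sub>m j * (P * M)" unfolding NP ..
  also have "\<dots> = (?N ^\<^sub>m j * P) * M" by (rule assoc_mult_mat[OF Nj P M, symmetric])
  also have "\<dots> = (M ^\<^sub>m j * P) * M" unfolding Suc ..
  also have "\<dots> = M ^\<^sub>m j * (P * M)" by (rule assoc_mult_mat[OF Mj P M])
  also have "\<dots> = M ^\<^sub>m j * (M * P)" unfolding PM ..
  also have "\<dots> = (M ^\<^sub>m j * M) * P" by (rule assoc_mult_mat[OF Mj M P, symmetric])
  also have "\<dots> = M ^\<^sub>m Suc j * P" by simp
  finally show ?case .
qed

lemma mpe_transfer:
  fixes Y Z P :: "complex mat"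
  assumes Y: "Y \<in> carrier_mat n n" and Z: "Z \<in> carrier_mat n n" and P: "P \<in> carrier_mat n n"
    and YP: "Y * P = Z * P" and PZ: "Z * P = P * Z"
  shows "mpe f Y * P = mpe f Z * P"
proof (induction f)
  case 0
  then show ?case using Y Z P by simp
next
  case (pCons a f)
  let ?y = "mpe f Y" and ?z = "mpe f Z"
  have y: "?y \<in> carrier_mat n n" and z: "?z \<in> carrier_mat n n" using Y Z by auto
  have zP: "?z * P = P * ?z" by (rule mpe_commute_gen[OF Z P PZ])
  have gen: "(a \<cdot>\<^sub>m 1\<^sub>m n + X * x) * P = a \<cdot>\<^sub>m P + X * (x * P)"
    if X: "X \<in> carrier_mat n n" and x: "x \<in> carrier_mat n n" for X x
  proof -
    have "(a \<cdot>\<^sub>m 1\<^sub>m n + X * x) * P = a \<cdot>\<^sub>m 1\<^sub>m n * P + X * x * P"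
      by (rule add_mult_distrib_mat) (use X x P in auto)
    also have "a \<cdot>\<^sub>m 1\<^sub>m n * P = a \<cdot>\<^sub>m P"
      using mult_smult_assoc_mat[OF one_carrier_mat P, of a] P by simp
    also have "X * x * P = X * (x * P)" by (rule assoc_mult_mat[OF X x P])
    finally show ?thesis .
  qed
  have "Y * (?y * P) = Y * (?z * P)" unfolding pCons ..
  also have "\<dots> = Y * (P * ?z)" unfolding zP ..
  also have "\<dots> = (Y * P) * ?z" by (rule assoc_mult_mat[OF Y P z, symmetric])
  also have "\<dots> = (Z * P) * ?z" unfolding YP ..
  also have "\<dots> = Z * (P * ?z)" by (rule assoc_mult_mat[OF Z P z])
  also have "\<dots> = Z * (?z * P)" unfolding zP ..
  finally have k: "Y * (?y * P) = Z * (?z * P)" .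
  show ?case unfolding mpe_pCons[OF Y] mpe_pCons[OF Z] gen[OF Y y] gen[OF Z z] k ..
qed

lemma target_alg:
  fixes A P :: "complex mat"
  assumes A: "A \<in> carrier_mat n n" and P: "P \<in> carrier_mat n n"
    and PM: "P * (A - lam \<cdot>\<^sub>m 1\<^sub>m n) = (A - lam \<cdot>\<^sub>m 1\<^sub>m n) * P" and PP: "P * P = P"
    and PA: "P * A = A * P" and qP: "mpe f A * P = mpe f A" and Pq: "P * mpe f A = mpe f A * P"
  shows "((A - lam \<cdot>\<^sub>m 1\<^sub>m n) * P) ^\<^sub>m j * mpe f (lam \<cdot>\<^sub>m 1\<^sub>m n + (A - lam \<cdot>\<^sub>m 1\<^sub>m n) * P) * P
     = (A - lam \<cdot>\<^sub>m 1\<^sub>m n) ^\<^sub>m j * mpe f A"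
proof -
  let ?M = "A - lam \<cdot>\<^sub>m 1\<^sub>m n"
  let ?N = "?M * P"
  let ?Y = "lam \<cdot>\<^sub>m 1\<^sub>m n + ?N"
  let ?Q = "mpe f A"
  have M: "?M \<in> carrier_mat n n" using A by simp
  have N: "?N \<in> carrier_mat n n" by (rule mult_carrier_mat[OF M P])
  have Y: "?Y \<in> carrier_mat n n" using N by simp
  have Q: "?Q \<in> carrier_mat n n" using A by simp
  have Nj: "?N ^\<^sub>m j \<in> carrier_mat n n" using N by simp
  have Mj: "?M ^\<^sub>m j \<in> carrier_mat n n" using M by simp
  have AMP: "A = lam \<cdot>\<^sub>m 1\<^sub>m n + ?M" using A by (intro eq_matI) auto
  have YP: "?Y * P = A * P"
  proof -
    have "?Y * P = lam \<cdot>\<^sub>m 1\<^sub>m n * P + ?N * P"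
      by (rule add_mult_distrib_mat) (use N P in auto)
    also have "?N * P = ?M * P" using assoc_mult_mat[OF M P P] PP by simp
    also have "lam \<cdot>\<^sub>m 1\<^sub>m n * P + ?M * P = (lam \<cdot>\<^sub>m 1\<^sub>m n + ?M) * P"
      by (rule add_mult_distrib_mat[symmetric]) (use M P in auto)
    also have "\<dots> = A * P" using AMP by simp
    finally show ?thesis .
  qed
  have tr: "mpe f ?Y * P = ?Q * P" by (rule mpe_transfer[OF Y A P YP PA[symmetric]])
  have "?N ^\<^sub>m j * mpe f ?Y * P = ?N ^\<^sub>m j * (mpe f ?Y * P)"
    by (rule assoc_mult_mat[OF Nj _ P]) (use Y in simp)
  also have "\<dots> = ?N ^\<^sub>m j * (P * ?Q)" unfolding tr qP Pq qP ..
  also have "\<dots> = (?N ^\<^sub>m j * P) * ?Q" by (rule assoc_mult_mat[OF Nj P Q, symmetric])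
  also have "\<dots> = (?M ^\<^sub>m j * P) * ?Q" unfolding pow_N_P[OF M P PM PP] ..
  also have "\<dots> = ?M ^\<^sub>m j * (P * ?Q)" by (rule assoc_mult_mat[OF Mj P Q])
  also have "\<dots> = ?M ^\<^sub>m j * ?Q" unfolding Pq qP ..
  finally show ?thesis .
qed

lemma mpe_prod_list:
  fixes Y :: "complex mat"
  assumes Y: "Y \<in> carrier_mat n n"
  shows "mpe (prod_list (map g xs)) Y = foldr (\<lambda>x X. mpe (g x) Y * X) xs (1\<^sub>m n)"
  by (induction xs) (simp_all add: mpe_mult[OF Y] Y)

lemma mat_set_prod_eq:
  fixes A Nn :: "complex mat"
  assumes A: "A \<in> carrier_mat n n" and Nn: "Nn \<in> carrier_mat n n"
  shows "mat_set_prod n (\<lambda>mu. (Nn + (lam - mu) \<cdot>\<^sub>m 1\<^sub>m n) ^\<^sub>m alg_mult A mu) (eigvals A - {lam})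
       = mpe (q_poly A lam) (lam \<cdot>\<^sub>m 1\<^sub>m n + Nn)"
proof -
  let ?S = "eigvals A - {lam}"
  let ?Y = "lam \<cdot>\<^sub>m 1\<^sub>m n + Nn"
  have Y: "?Y \<in> carrier_mat n n" using Nn by simp
  have fin: "finite ?S" using finite_eigvals[OF A] by simp
  define xs where "xs = (SOME xs. distinct xs \<and> set xs = ?S)"
  have xs: "distinct xs \<and> set xs = ?S" unfolding xs_def
    by (rule someI_ex) (use finite_distinct_list[OF fin] in blast)
  have q: "q_poly A lam = prod_list (map (\<lambda>x. [:-x,1:] ^ alg_mult A x) xs)"
    unfolding q_poly_def using xs prod.distinct_set_conv_list by metis
  have f: "mpe ([:-x,1:] ^ alg_mult A x) ?Y = (Nn + (lam - x) \<cdot>\<^sub>m 1\<^sub>m n) ^\<^sub>m alg_mult A x" for x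
  proof -
    have "mpe [:-x,1:] ?Y = Nn + (lam - x) \<cdot>\<^sub>m 1\<^sub>m n"
      unfolding mpe_X[OF Y] using Nn by (intro eq_matI) (auto simp: algebra_simps)
    then show ?thesis unfolding mpe_pow[OF Y] by simp
  qed
  show ?thesis unfolding mat_set_prod_def xs_def[symmetric] q mpe_prod_list[OF Y] f ..
qed

theorem theorem3:
  fixes A :: "complex mat" and n :: nat and lam :: complex
  assumes "A \<in> carrier_mat n n"
    and "lam \<in> eigvals A"
  shows "(\<forall>s < alg_mult A lam.
            adjB_deriv A s lam =
              of_nat (fact s) \<cdot>\<^sub>m
                (nilp_part A lam ^\<^sub>m (alg_mult A lam - 1 - s)
                 * mat_poly_eval (q_poly A lam) (lam \<cdot>\<^sub>m 1\<^sub>m n + nilp_part A lam)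
                 * spec_proj A lam))
       \<and> adjB_deriv A (alg_mult A lam - 1) lam =
              of_nat (fact (alg_mult A lam - 1)) \<cdot>\<^sub>m
                (mat_set_prod n
                   (\<lambda>mu. (nilp_part A lam + (lam - mu) \<cdot>\<^sub>m 1\<^sub>m n) ^\<^sub>m alg_mult A mu)
                   (eigvals A - {lam})
                 * spec_proj A lam)"
proof -
  have A: "A \<in> carrier_mat n n" and lam: "lam \<in> eigvals A" using assms by auto
  obtain u v where bez: "u * q_poly A lam + v * [:-lam,1:] ^ alg_mult A lam = 1"
    using bezout_eig[OF A] by blast
  let ?P = "mpe (u * q_poly A lam) A"
  let ?M = "A - lam \<cdot>\<^sub>m 1\<^sub>m n"
  let ?m = "alg_mult A lam"
  have dA: "dim_row A = n" using A by simp
  have SP: "spec_proj A lam = ?P" by (rule spec_proj_eq[OF A lam bez])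
  have NP: "nilp_part A lam = ?M * ?P" unfolding nilp_part_def dA SP ..
  have Pc: "?P \<in> carrier_mat n n" using A by simp
  have key: "adjB_deriv A s lam =
              of_nat (fact s) \<cdot>\<^sub>m
                (nilp_part A lam ^\<^sub>m (?m - 1 - s)
                 * mat_poly_eval (q_poly A lam) (lam \<cdot>\<^sub>m 1\<^sub>m n + nilp_part A lam)
                 * spec_proj A lam)" if s: "s < ?m" for s
  proof -
    have "nilp_part A lam ^\<^sub>m (?m - 1 - s)
                 * mat_poly_eval (q_poly A lam) (lam \<cdot>\<^sub>m 1\<^sub>m n + nilp_part A lam)
                 * spec_proj A lam = ?M ^\<^sub>m (?m - 1 - s) * mpe (q_poly A lam) A"
      unfolding NP SP
      by (rule target_alg[OF A Pc P_comm_M[OF A lam bez] P_idem[OF A lam bez]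
            P_comm_A[OF A lam bez] qA_P[OF A lam bez] P_comm_q[OF A lam bez]])
    moreover have "?m - 1 - s = ?m - Suc s" by simp
    ultimately show ?thesis
      unfolding adjB_deriv_Bc[OF A] Bc_formula[OF A lam s] by simp
  qed
  have m0: "?m > 0" by (rule alg_mult_pos[OF A lam])
  have Mc: "?M \<in> carrier_mat n n" using A by simp
  have N: "nilp_part A lam \<in> carrier_mat n n" unfolding NP by (rule mult_carrier_mat[OF Mc Pc])
  have last: "adjB_deriv A (?m - 1) lam =
              of_nat (fact (?m - 1)) \<cdot>\<^sub>m
                (mat_set_prod n
                   (\<lambda>mu. (nilp_part A lam + (lam - mu) \<cdot>\<^sub>m 1\<^sub>m n) ^\<^sub>m alg_mult A mu)
                   (eigvals A - {lam})
                 * spec_proj A lam)"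
    using key[of "?m - 1"] m0 N unfolding mat_set_prod_eq[OF A N] by simp
  show ?thesis using key last by blast
qed


end
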